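(* For every paracompact (Hausdorff) Baire $\sigma$-space $X$, and in particular for every stratifiable Baire space $X$, $dis(X)\geq\Delta(X)$.
   Context: $dis(X)$ is the least number of discrete subspaces needed to cover $X$; $\Delta(X)$ is the least cardinality of a non-empty open subset of $X$. A $\sigma$-space is a space having a $\sigma$-discrete network (a network being a family $\mathcal{N}$ of subsets such that for every open $U$ and $x\in U$ there is $N\in\mathcal{N}$ with $x\in N\subseteq U$). *)

theory Defs
  imports "HOL-Analysis.Analysis" "HOL-Library.Equipollence"
begin

text \<open>Paracompactness (the Hausdorff axiom is assumed separately): every open cover
  has a locally finite open refinement covering the space.\<close>
definition paracompact_space :: "'a topology \<Rightarrow> bool" where
  "paracompact_space X \<longleftrightarrow>
     (\<forall>\<U>. (\<forall>U\<in>\<U>. openin X U) \<and> topspace X \<subseteq> \<Union>\<U> \<longrightarrow>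
        (\<exists>\<V>. (\<forall>V\<in>\<V>. openin X V) \<and> topspace X \<subseteq> \<Union>\<V> \<and> locally_finite_in X \<V> \<and>
             (\<forall>V\<in>\<V>. \<exists>U\<in>\<U>. V \<subseteq> U)))"

definition Baire_space :: "'a topology \<Rightarrow> bool" where
  "Baire_space X \<longleftrightarrow>
     (\<forall>G :: nat \<Rightarrow> 'a set. (\<forall>n. openin X (G n) \<and> X closure_of (G n) = topspace X) \<longrightarrow>
        X closure_of (topspace X \<inter> (\<Inter>n. G n)) = topspace X)"

definition discrete_family_in :: "'a topology \<Rightarrow> 'a set set \<Rightarrow> bool" where
  "discrete_family_in X \<A> \<longleftrightarrow>
     (\<Union>\<A> \<subseteq> topspace X) \<and>
     (\<forall>x\<in>topspace X. \<exists>V. openin X V \<and> x \<in> V \<and>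
        (\<forall>A\<in>\<A>. \<forall>B\<in>\<A>. A \<inter> V \<noteq> {} \<and> B \<inter> V \<noteq> {} \<longrightarrow> A = B))"

definition sigma_discrete_in :: "'a topology \<Rightarrow> 'a set set \<Rightarrow> bool" where
  "sigma_discrete_in X \<N> \<longleftrightarrow>
     (\<exists>F :: nat \<Rightarrow> 'a set set. (\<forall>n. discrete_family_in X (F n)) \<and> \<N> = (\<Union>n. F n))"

definition network_of :: "'a topology \<Rightarrow> 'a set set \<Rightarrow> bool" where
  "network_of X \<N> \<longleftrightarrow>
     (\<forall>N\<in>\<N>. N \<subseteq> topspace X) \<and>
     (\<forall>U x. openin X U \<and> x \<in> U \<longrightarrow> (\<exists>N\<in>\<N>. x \<in> N \<and> N \<subseteq> U))"

definition sigma_space :: "'a topology \<Rightarrow> bool" where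
  "sigma_space X \<longleftrightarrow> (\<exists>\<N>. network_of X \<N> \<and> sigma_discrete_in X \<N>)"

definition discrete_subspace :: "'a topology \<Rightarrow> 'a set \<Rightarrow> bool" where
  "discrete_subspace X D \<longleftrightarrow> D \<subseteq> topspace X \<and> subtopology X D = discrete_topology D"

text \<open>dis(X) \<ge> \<Delta>(X): for every cover of X by discrete subspaces there is a
  non-empty open set of cardinality at most that of the cover (cardinals are well-ordered,
  so this is exactly the inequality between the two minima).\<close>
definition dis_ge_Delta :: "'a topology \<Rightarrow> bool" where
  "dis_ge_Delta X \<longleftrightarrow>
     (\<forall>\<D>. (\<forall>D\<in>\<D>. discrete_subspace X D) \<and> \<Union>\<D> = topspace X \<longrightarrow>
        (\<exists>U. openin X U \<and> U \<noteq> {} \<and> U \<lesssim> \<D>))"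

end

theory Submission
  imports Defs
begin
lemma inf_sq: "infinite (A::'a set) \<Longrightarrow> A \<times> A \<lesssim> A"
  by (metis card_of_Times_same_infinite eqpoll_iff_card_of_ordIso eqpoll_imp_lepoll)

theorem mainTheorem7:
  fixes X :: "'a topology"
  assumes "topspace X \<noteq> {}"
    and "Hausdorff_space X" and "paracompact_space X"
    and "Baire_space X" and "sigma_space X"
  shows "dis_ge_Delta X"
  unfolding dis_ge_Delta_def
proof (intro allI impI)
  fix \<D> assume HD: "(\<forall>D\<in>\<D>. discrete_subspace X D) \<and> \<Union>\<D> = topspace X"
  obtain \<N> where net: "network_of X \<N>" and sd: "sigma_discrete_in X \<N>"
    using assms(5) sigma_space_def by blast
  obtain F :: "nat \<Rightarrow> 'a set set" where Fd: "\<And>n. discrete_family_in X (F n)" and NF: "\<N> = (\<Union>n. F n)"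
    using sd sigma_discrete_in_def by blast
  have "\<forall>x\<in>topspace X. \<exists>D N k. D \<in> \<D> \<and> x \<in> D \<and> N \<in> F k \<and> N \<inter> D = {x}"
  proof
    fix x assume x: "x \<in> topspace X"
    have "x \<in> \<Union>\<D>" using HD x by simp
    then obtain D where D: "D \<in> \<D>" "x \<in> D" by (rule UnionE)
    then have "subtopology X D = discrete_topology D" using HD discrete_subspace_def by blast
    then have "openin (subtopology X D) {x}" using D by simp
    then have "\<exists>U. openin X U \<and> {x} = U \<inter> D" by (simp only: openin_subtopology)
    then obtain U where U: "openin X U" "{x} = U \<inter> D" by blast
    have xU: "x \<in> U" using U(2) by blast
    have "\<forall>U x. openin X U \<and> x \<in> U \<longrightarrow> (\<exists>N\<in>\<N>. x \<in> N \<and> N \<subseteq> U)"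
      using net unfolding network_of_def by (rule conjunct2)
    then have "\<exists>N\<in>\<N>. x \<in> N \<and> N \<subseteq> U" using U(1) xU by blast
    then obtain N where N: "N \<in> \<N>" "x \<in> N" "N \<subseteq> U" by blast
    then obtain k where "N \<in> F k" using NF by blast
    moreover have "N \<inter> D = {x}"
    proof
      show "N \<inter> D \<subseteq> {x}" using N(3) U(2) by blast
      show "{x} \<subseteq> N \<inter> D" using N(2) D(2) by simp
    qed
    ultimately show "\<exists>D N k. D \<in> \<D> \<and> x \<in> D \<and> N \<in> F k \<and> N \<inter> D = {x}" using D by blast
  qed
  then obtain Df Nf kf where ch: "\<And>x. x \<in> topspace X \<Longrightarrow>
      Df x \<in> \<D> \<and> x \<in> Df x \<and> Nf x \<in> F (kf x) \<and> Nf x \<inter> Df x = {x}"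
  proof -
    assume r: "\<And>Df Nf kf. (\<And>x. x \<in> topspace X \<Longrightarrow>
      Df x \<in> \<D> \<and> x \<in> Df x \<and> Nf x \<in> F (kf x) \<and> Nf x \<inter> Df x = {x}) \<Longrightarrow> thesis"
    assume "\<forall>x\<in>topspace X. \<exists>D N k. D \<in> \<D> \<and> x \<in> D \<and> N \<in> F k \<and> N \<inter> D = {x}"
    then have "\<forall>x\<in>topspace X. \<exists>p. fst p \<in> \<D> \<and> x \<in> fst p \<and> fst (snd p) \<in> F (snd (snd p)) \<and> fst (snd p) \<inter> fst p = {x}"
      by force
    then obtain f where f: "\<forall>x\<in>topspace X. fst (f x) \<in> \<D> \<and> x \<in> fst (f x) \<and> fst (snd (f x)) \<in> F (snd (snd (f x))) \<and> fst (snd (f x)) \<inter> fst (f x) = {x}"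
      by (rule bchoice[THEN exE])
    show thesis
      by (rule r[of "\<lambda>x. fst (f x)" "\<lambda>x. fst (snd (f x))" "\<lambda>x. snd (snd (f x))"]) (use f in blast)
  qed
  have inj: "x = y" if "x \<in> topspace X" "y \<in> topspace X" "Df x = Df y" "Nf x = Nf y" for x y
  proof -
    have "y \<in> Nf x \<inter> Df x" using ch[OF that(2)] that(3,4) by simp
    then show ?thesis using ch[OF that(1)] by simp
  qed
  have inN: "x \<in> Nf x" if "x \<in> topspace X" for x
  proof -
    have "x \<in> Nf x \<inter> Df x" using ch[OF that] by simp
    then show ?thesis by blast
  qed
  define A where "A m = {x \<in> topspace X. kf x = m}" for m
  have "\<exists>m. X interior_of (X closure_of A m) \<noteq> {}"
  proof (rule ccontr)
    assume "\<not> ?thesis"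
    then have e: "\<And>m. X interior_of (X closure_of A m) = {}" by blast
    define G where "G m = topspace X - X closure_of A m" for m
    have "\<forall>n. openin X (G n) \<and> X closure_of (G n) = topspace X"
      using e by (auto simp: G_def closure_of_complement)
    then have "X closure_of (topspace X \<inter> (\<Inter>n. G n)) = topspace X"
      using assms(4) Baire_space_def by blast
    moreover have "topspace X \<inter> (\<Inter>n. G n) = {}"
    proof -
      have "x \<notin> G (kf x)" if "x \<in> topspace X" for x
        using that closure_of_subset[of "A (kf x)" X] by (auto simp: G_def A_def)
      then show ?thesis by blast
    qed
    ultimately show False using assms(1) by simp
  qed
  then obtain m where m: "X interior_of (X closure_of A m) \<noteq> {}" by blast
  define G where "G = X interior_of (X closure_of A m)"
  obtain x where xG: "x \<in> G" using m G_def by blast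
  have Gop: "openin X G" and GA: "G \<subseteq> X closure_of A m"
    by (auto simp: G_def interior_of_subset)
  have xt: "x \<in> topspace X" using Gop xG openin_subset by blast
  obtain V where V: "openin X V" "x \<in> V"
     "\<And>P Q. P \<in> F m \<Longrightarrow> Q \<in> F m \<Longrightarrow> P \<inter> V \<noteq> {} \<Longrightarrow> Q \<inter> V \<noteq> {} \<Longrightarrow> P = Q"
    using Fd[of m] xt unfolding discrete_family_in_def by meson
  define W where "W = G \<inter> V"
  define T where "T = A m \<inter> W"
  have Wop: "openin X W" using Gop V(1) unfolding W_def by (rule openin_Int)
  have Wne: "W \<noteq> {}" using xG V W_def by blast
  have WT: "W \<subseteq> X closure_of T"
  proof -
    have "W \<subseteq> W \<inter> X closure_of A m" using GA unfolding W_def by blast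
    also have "\<dots> \<subseteq> X closure_of (W \<inter> A m)" by (rule openin_Int_closure_of_subset[OF Wop])
    also have "W \<inter> A m = T" unfolding T_def by blast
    finally show ?thesis .
  qed
  have Tt: "T \<subseteq> topspace X" by (auto simp: T_def A_def)
  have sameN: "Nf t = Nf t'" if "t \<in> T" "t' \<in> T" for t t'
  proof -
    have "t \<in> topspace X" "t' \<in> topspace X" "kf t = m" "kf t' = m" "t \<in> V" "t' \<in> V"
      using that by (auto simp: T_def A_def W_def)
    then have "Nf t \<in> F m" "Nf t' \<in> F m" "t \<in> Nf t" "t' \<in> Nf t'" using ch inN by metis+
    then have "Nf t \<inter> V \<noteq> {}" "Nf t' \<inter> V \<noteq> {}" using \<open>t \<in> V\<close> \<open>t' \<in> V\<close> by blast+
    then show ?thesis using V(3) \<open>Nf t \<in> F m\<close> \<open>Nf t' \<in> F m\<close> by blast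
  qed
  have TD: "T \<lesssim> \<D>"
    unfolding lepoll_def
  proof (intro exI conjI)
    show "inj_on Df T"
    proof (rule inj_onI)
      fix a b assume "a \<in> T" "b \<in> T" "Df a = Df b"
      then show "a = b" using sameN[of a b] inj[of a b] Tt by blast
    qed
    show "Df ` T \<subseteq> \<D>" using ch Tt by blast
  qed
  show "\<exists>U. openin X U \<and> U \<noteq> {} \<and> U \<lesssim> \<D>"
  proof (cases "finite \<D>")
    case True
    obtain f where f: "inj_on f T" "f ` T \<subseteq> \<D>" using TD unfolding lepoll_def by blast
    then have "finite T" using True by (meson finite_imageD finite_subset)
    moreover have "t1_space X" using assms(2) by (rule Hausdorff_imp_t1_space)
    ultimately have "closedin X T" using Tt by (meson t1_space_closedin_finite)
    then have "X closure_of T = T" by (simp only: closure_of_eq)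
    then have "W \<subseteq> T" using WT by simp
    then have "W \<lesssim> T" by (rule subset_imp_lepoll)
    then have "W \<lesssim> \<D>" using TD by (rule lepoll_trans)
    then show ?thesis using Wop Wne by blast
  next
    case False
    define \<U> where "\<U> k = {U. openin X U \<and> (\<forall>P\<in>F k. \<forall>Q\<in>F k. P \<inter> U \<noteq> {} \<and> Q \<inter> U \<noteq> {} \<longrightarrow> P = Q)}" for k
    have ex: "\<exists>\<V>. (\<forall>V\<in>\<V>. openin X V) \<and> topspace X \<subseteq> \<Union>\<V> \<and> locally_finite_in X \<V> \<and>
             (\<forall>V\<in>\<V>. \<exists>U\<in>\<U> k. V \<subseteq> U)" for k
    proof -
      have o: "\<forall>U\<in>\<U> k. openin X U" unfolding \<U>_def by blast
      have "topspace X \<subseteq> \<Union>(\<U> k)"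
      proof
        fix z assume z: "z \<in> topspace X"
        obtain V where "openin X V" "z \<in> V"
          "\<forall>P\<in>F k. \<forall>Q\<in>F k. P \<inter> V \<noteq> {} \<and> Q \<inter> V \<noteq> {} \<longrightarrow> P = Q"
          using Fd[of k] z unfolding discrete_family_in_def by blast
        then have "V \<in> \<U> k" unfolding \<U>_def by blast
        then show "z \<in> \<Union>(\<U> k)" using \<open>z \<in> V\<close> by blast
      qed
      have "\<forall>\<U>. (\<forall>U\<in>\<U>. openin X U) \<and> topspace X \<subseteq> \<Union>\<U> \<longrightarrow>
        (\<exists>\<V>. (\<forall>V\<in>\<V>. openin X V) \<and> topspace X \<subseteq> \<Union>\<V> \<and> locally_finite_in X \<V> \<and>
             (\<forall>V\<in>\<V>. \<exists>U\<in>\<U>. V \<subseteq> U))"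
        using assms(3) by (simp only: paracompact_space_def)
      then have "(\<forall>U\<in>\<U> k. openin X U) \<and> topspace X \<subseteq> \<Union>(\<U> k) \<longrightarrow>
        (\<exists>\<V>. (\<forall>V\<in>\<V>. openin X V) \<and> topspace X \<subseteq> \<Union>\<V> \<and> locally_finite_in X \<V> \<and>
             (\<forall>V\<in>\<V>. \<exists>U\<in>\<U> k. V \<subseteq> U))" by (rule spec)
      then show ?thesis using o \<open>topspace X \<subseteq> \<Union>(\<U> k)\<close> by simp
    qed
    obtain \<V> where VV': "\<forall>k. (\<forall>V\<in>\<V> k. openin X V) \<and> topspace X \<subseteq> \<Union>(\<V> k) \<and> locally_finite_in X (\<V> k) \<and>
             (\<forall>V\<in>\<V> k. \<exists>U\<in>\<U> k. V \<subseteq> U)"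
    proof -
      have "\<forall>k. \<exists>\<V>. (\<forall>V\<in>\<V>. openin X V) \<and> topspace X \<subseteq> \<Union>\<V> \<and> locally_finite_in X \<V> \<and>
             (\<forall>V\<in>\<V>. \<exists>U\<in>\<U> k. V \<subseteq> U)" by (intro allI) (rule ex)
      then show ?thesis using that by (elim choice[THEN exE]) blast
    qed
    note VV = spec[OF VV']
    have fin: "finite {V' \<in> \<V> k. t \<in> V'}" if "t \<in> topspace X" for k t
    proof -
      have "locally_finite_in X (\<V> k)" by (rule conjunct1[OF conjunct2[OF conjunct2[OF VV]]])
      then have "\<forall>x\<in>topspace X. \<exists>V. openin X V \<and> x \<in> V \<and> finite {U \<in> \<V> k. U \<inter> V \<noteq> {}}"
        unfolding locally_finite_in_def by (rule conjunct2)
      from bspec[OF this that] obtain Ob where "openin X Ob" "t \<in> Ob" "finite {U \<in> \<V> k. U \<inter> Ob \<noteq> {}}"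
        by (elim exE conjE)
      moreover have "{V' \<in> \<V> k. t \<in> V'} \<subseteq> {U \<in> \<V> k. U \<inter> Ob \<noteq> {}}"
        using \<open>t \<in> Ob\<close> by blast
      ultimately show ?thesis by (meson finite_subset)
    qed
    have "\<forall>y\<in>W. \<exists>V' t. V' \<in> \<V> (kf y) \<and> y \<in> V' \<and> t \<in> T \<and> t \<in> V'"
    proof
      fix y assume y: "y \<in> W"
      then have yt: "y \<in> topspace X" using Wop openin_subset by blast
      have "topspace X \<subseteq> \<Union>(\<V> (kf y))" using VV by blast
      then obtain V' where V': "V' \<in> \<V> (kf y)" "y \<in> V'" using yt by blast
      then have "openin X V'" using VV by blast
      then have "openin X (V' \<inter> W)" using Wop by (rule openin_Int)
      moreover have "y \<in> V' \<inter> W" using y V' by blast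
      moreover have "y \<in> X closure_of T" using WT y by blast
      then have "\<forall>U. y \<in> U \<and> openin X U \<longrightarrow> (\<exists>z. z \<in> T \<and> z \<in> U)"
        unfolding in_closure_of by (rule conjunct2)
      ultimately obtain t where "t \<in> T" "t \<in> V' \<inter> W" by blast
      then show "\<exists>V' t. V' \<in> \<V> (kf y) \<and> y \<in> V' \<and> t \<in> T \<and> t \<in> V'" using V' by blast
    qed
    then obtain Vf tf where Vt: "\<And>y. y \<in> W \<Longrightarrow> Vf y \<in> \<V> (kf y) \<and> y \<in> Vf y \<and> tf y \<in> T \<and> tf y \<in> Vf y"
      by metis
    define g where "g y = (Df y, tf y, kf y, to_nat_on {V' \<in> \<V> (kf y). tf y \<in> V'} (Vf y))" for y
    have Wt: "W \<subseteq> topspace X" using Wop openin_subset by blast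
    have "W \<lesssim> \<D> \<times> T \<times> (UNIV::nat set) \<times> (UNIV::nat set)"
      unfolding lepoll_def
    proof (intro exI conjI)
      show "g ` W \<subseteq> \<D> \<times> T \<times> UNIV \<times> UNIV"
      proof
        fix z assume "z \<in> g ` W"
        then obtain y where y: "y \<in> W" "z = g y" by blast
        then have "Df y \<in> \<D>" using ch Wt by blast
        moreover have "tf y \<in> T" using Vt y(1) by blast
        ultimately show "z \<in> \<D> \<times> T \<times> UNIV \<times> UNIV" using y(2) by (simp add: g_def)
      qed
      show "inj_on g W"
      proof (rule inj_onI)
        fix y y' assume y: "y \<in> W" "y' \<in> W" "g y = g y'"
        have yt: "y \<in> topspace X" "y' \<in> topspace X" using y Wt by blast+
        have e: "Df y = Df y'" "tf y = tf y'" "kf y = kf y'" using y(3) by (auto simp: g_def)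
        define S where "S = {V' \<in> \<V> (kf y). tf y \<in> V'}"
        have "tf y \<in> topspace X" using Tt Vt y(1) by blast
        then have "countable S" using fin[of "tf y" "kf y"] unfolding S_def by (simp add: countable_finite)
        moreover have "Vf y \<in> S" "Vf y' \<in> S" using Vt[OF y(1)] Vt[OF y(2)] e by (auto simp: S_def)
        moreover have "to_nat_on S (Vf y) = to_nat_on S (Vf y')" using y(3) e by (simp add: g_def S_def)
        ultimately have VE: "Vf y = Vf y'" using inj_on_to_nat_on unfolding inj_on_def by blast
        have "\<forall>V\<in>\<V> (kf y). \<exists>U\<in>\<U> (kf y). V \<subseteq> U" using VV by blast
        then obtain U where U: "U \<in> \<U> (kf y)" "Vf y \<subseteq> U" using Vt y(1) by blast
        have N1: "Nf y \<in> F (kf y)" "Nf y' \<in> F (kf y)" using ch[OF yt(1)] ch[OF yt(2)] e(3) by simp_all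
        have "y \<in> Nf y" "y' \<in> Nf y'" using inN yt by blast+
        moreover have "y \<in> Vf y" "y' \<in> Vf y" using Vt[OF y(1)] Vt[OF y(2)] VE by auto
        ultimately have "Nf y \<inter> U \<noteq> {}" "Nf y' \<inter> U \<noteq> {}" using U(2) by blast+
        then have "Nf y = Nf y'" using U(1) N1 unfolding \<U>_def by blast
        then show "y = y'" using inj yt e by blast
      qed
    qed
    moreover have "\<D> \<times> T \<times> (UNIV::nat set) \<times> (UNIV::nat set) \<lesssim> \<D> \<times> \<D> \<times> \<D> \<times> \<D>"
    proof -
      have n: "(UNIV::nat set) \<lesssim> \<D>" using False infinite_le_lepoll by blast
      have "(UNIV::nat set) \<times> (UNIV::nat set) \<lesssim> \<D> \<times> \<D>" using times_lepoll_mono[OF n n] .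
      then have "T \<times> (UNIV::nat set) \<times> (UNIV::nat set) \<lesssim> \<D> \<times> \<D> \<times> \<D>"
        using times_lepoll_mono[OF TD] by blast
      then show ?thesis using times_lepoll_mono[OF lepoll_refl[of \<D>]] by blast
    qed
    moreover have "\<D> \<times> \<D> \<times> \<D> \<times> \<D> \<lesssim> \<D>"
    proof -
      have s: "\<D> \<times> \<D> \<lesssim> \<D>" using inf_sq False by blast
      have "\<D> \<times> \<D> \<times> \<D> \<lesssim> \<D> \<times> \<D>" using times_lepoll_mono[OF lepoll_refl[of \<D>] s] .
      then have s3: "\<D> \<times> \<D> \<times> \<D> \<lesssim> \<D>" using s by (rule lepoll_trans)
      have "\<D> \<times> \<D> \<times> \<D> \<times> \<D> \<lesssim> \<D> \<times> \<D>" using times_lepoll_mono[OF lepoll_refl[of \<D>] s3] .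
      then show ?thesis using s by (rule lepoll_trans)
    qed
    ultimately have "W \<lesssim> \<D>" by (meson lepoll_trans)
    then show ?thesis using Wop Wne by blast
  qed
qed
end
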